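(* Let $v$ be an odd positive integer and $k$ a positive integer. Every $(v,k)$ cyclic difference packing $(\mathbb{Z}_v,\mathcal{D})$ is a $(v,k,1)$ non-half-sum disjoint packing, i.e., $(\mathbb{Z}_v,\{\mathcal{D}\})$ is a $(v,k,1)$ NHSDP.
   Context: A $(v,k)$ cyclic difference packing (CDP) is a pair $(\mathbb{Z}_v,\mathcal{D})$ where $\mathcal{D}=\{d_1,\dots,d_k\}$ is a $k$-subset of $\mathbb{Z}_v$ such that each non-zero element of $\mathbb{Z}_v$ has at most one representation as a difference $d_i-d_j$ with $d_i,d_j\in\mathcal{D}$. For odd $v$, a $(v,g,b)$ non-half-sum disjoint packing (NHSDP) is a pair $(\mathbb{Z}_v,\mathfrak{D})$ where $\mathfrak{D}$ is a family of $b$ subsets ("blocks") of $\mathbb{Z}_v$, each of size $g$, such that (i) any two different blocks are disjoint, and (ii) for each block $\mathcal{D}\in\mathfrak{D}$ and any two different elements $x,y\in\mathcal{D}$, the half-sum $(x+y)\cdot2^{-1}\in\mathbb{Z}_v$ does not belong to any block of $\mathfrak{D}$. *)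

theory Defs
  imports Main
begin

(* Z_v is modelled as the carrier {0..<v} of naturals with arithmetic mod v. *)

definition zdiff :: "nat \<Rightarrow> nat \<Rightarrow> nat \<Rightarrow> nat" where
  "zdiff v x y = nat ((int x - int y) mod int v)"

definition is_CDP :: "nat \<Rightarrow> nat \<Rightarrow> nat set \<Rightarrow> bool" where
  "is_CDP v k D \<longleftrightarrow> D \<subseteq> {0..<v} \<and> card D = k \<and>
     (\<forall>g \<in> {1..<v}. card {(a, b). a \<in> D \<and> b \<in> D \<and> zdiff v a b = g} \<le> 1)"

(* inverse of 2 in Z_v for odd v *)
definition inv2 :: "nat \<Rightarrow> nat" where
  "inv2 v = (v + 1) div 2"

definition half_sum :: "nat \<Rightarrow> nat \<Rightarrow> nat \<Rightarrow> nat" where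
  "half_sum v x y = ((x + y) * inv2 v) mod v"

definition is_NHSDP :: "nat \<Rightarrow> nat \<Rightarrow> nat \<Rightarrow> nat set set \<Rightarrow> bool" where
  "is_NHSDP v g b F \<longleftrightarrow> odd v \<and> finite F \<and> card F = b \<and>
     (\<forall>D \<in> F. D \<subseteq> {0..<v} \<and> card D = g) \<and>
     (\<forall>D1 \<in> F. \<forall>D2 \<in> F. D1 \<noteq> D2 \<longrightarrow> D1 \<inter> D2 = {}) \<and>
     (\<forall>D \<in> F. \<forall>x \<in> D. \<forall>y \<in> D. x \<noteq> y \<longrightarrow> half_sum v x y \<notin> \<Union>F)"

end

theory Submission
  imports Defs
begin

lemma half_key:
  fixes v x y :: nat
  assumes "odd v"
  shows "(2 * half_sum v x y) mod v = (x + y) mod v"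
proof -
  have "2 * inv2 v = v + 1" using assms unfolding inv2_def by presburger
  have "(2 * half_sum v x y) mod v = (2 * ((x + y) * inv2 v)) mod v"
    unfolding half_sum_def by (simp add: mod_mult_right_eq)
  also have "2 * ((x + y) * inv2 v) = (x + y) * (v + 1)"
    using \<open>2 * inv2 v = v + 1\<close> by (metis mult.left_commute)
  also have "(x + y) * (v + 1) = (x + y) + (x + y) * v" by simp
  also have "((x + y) + (x + y) * v) mod v = (x + y) mod v"
    by (rule mod_mult_self1)
  finally show ?thesis .
qed

theorem lemma5:
  fixes v k :: nat and D :: "nat set"
  assumes "odd v" and "v > 0" and "k > 0" and "is_CDP v k D"
  shows "is_NHSDP v k 1 {D}"
proof -
  have sub: "D \<subseteq> {0..<v}" and cD: "card D = k"
    and pk: "\<forall>g \<in> {1..<v}. card {(a, b). a \<in> D \<and> b \<in> D \<and> zdiff v a b = g} \<le> 1"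
    using assms(4) unfolding is_CDP_def by auto
  have fin: "finite D" using cD assms(3) card_ge_0_finite by blast
  have "half_sum v x y \<notin> D" if xD: "x \<in> D" and yD: "y \<in> D" and xy: "x \<noteq> y" for x y
  proof
    define z where "z = half_sum v x y"
    assume zD: "half_sum v x y \<in> D"
    hence zD: "z \<in> D" unfolding z_def .
    have xv: "x < v" "y < v" "z < v" using sub xD yD zD by auto
    have k2: "(2 * z) mod v = (x + y) mod v" unfolding z_def using half_key[OF assms(1)] .
    hence k2i: "(2 * int z) mod int v = (int x + int y) mod int v"
      by (metis of_nat_add of_nat_mult of_nat_numeral zmod_int)
    have eq: "(int x - int z) mod int v = (int z - int y) mod int v"
    proof -
      have "(int x - int z) mod int v = ((int x + int y) - (int z + int y)) mod int v" by simp
      also have "\<dots> = ((2 * int z) - (int z + int y)) mod int v"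
        using k2i by (metis mod_diff_left_eq)
      also have "\<dots> = (int z - int y) mod int v" by simp
      finally show ?thesis .
    qed
    have xz: "x \<noteq> z"
    proof
      assume "x = z"
      hence "(int z - int y) mod int v = 0" using eq by simp
      hence "int z mod int v = int y mod int v" by (metis mod_eq_dvd_iff dvd_eq_mod_eq_0)
      thus False using xv xy \<open>x = z\<close> by simp
    qed
    define g where "g = zdiff v x z"
    have gv: "g < v" unfolding g_def zdiff_def using assms(2)
      by (simp add: nat_less_iff)
    have g0: "g \<noteq> 0"
    proof
      assume "g = 0"
      hence "(int x - int z) mod int v = 0" unfolding g_def zdiff_def
        using assms(2) by (simp add: nat_eq_iff)
      hence "int x mod int v = int z mod int v" by (metis mod_eq_dvd_iff dvd_eq_mod_eq_0)
      thus False using xv xz by simp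
    qed
    have g2: "zdiff v z y = g" unfolding g_def zdiff_def using eq by simp
    let ?S = "{(a, b). a \<in> D \<and> b \<in> D \<and> zdiff v a b = g}"
    have "{(x, z), (z, y)} \<subseteq> ?S" using xD yD zD g2 g_def by auto
    moreover have "finite ?S" by (rule finite_subset[of _ "D \<times> D"]) (use fin in auto)
    ultimately have "card {(x, z), (z, y)} \<le> card ?S" by (rule card_mono[rotated])
    moreover have "card {(x, z), (z, y)} = 2" using xz by simp
    moreover have "card ?S \<le> 1" using pk g0 gv by auto
    ultimately show False by simp
  qed
  thus ?thesis unfolding is_NHSDP_def using assms(1) sub cD by auto
qed

end
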